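(* Let $p_1,\dots,p_\theta\ge0$ with $\sum_i p_i=1$. Then \[ \mathbb E\Big[\prod_{\gamma\in\mathcal C(\omega)}\Big(\sum_{i=1}^\theta p_i^{|\gamma|}\Big)\Big]=\sum_{\lambda\vdash n}\binom{n}{\lambda}\Big(\sum_{\kappa\in K(\lambda)}\prod_{i=1}^\theta p_i^{\kappa_i}\Big)\sum_{\sigma\in\mathcal T_\lambda}f(\sigma). \]
   Context: Fix $\theta\in\{2,3,\dots\}$, $\beta>0$. Let $V=\{1,\dots,n\}$, $E$ the set of unordered pairs of distinct elements of $V$. Under $\mathbb P$ (expectation $\mathbb E$), let $\omega=(\omega_{xy}:xy\in E)$ be independent rate-1 Poisson point processes on $[0,\beta/n]$, and $\sigma(\omega)\in\mathcal S_n$ the time-ordered composition of the transpositions $(x,y)$ over all points $t\in\omega_{xy}$. $\mathcal C(\omega)$ is the set of cycles of $\sigma(\omega)$ (including fixed points), $|\gamma|$ the size of cycle $\gamma$, and $f(\sigma)=\mathbb P(\sigma(\omega)=\sigma)$. A composition of $n$ is a vector $\kappa=(\kappa_1,\dots,\kappa_\theta)$ of nonnegative integers with $\sum\kappa_j=n$; it is a partition, written $\lambda\vdash n$, if moreover $\lambda_1\ge\dots\ge\lambda_\theta$ (so partitions have exactly $\theta$ entries, some possibly $0$). $K(\lambda)$ is the set of compositions obtained by reordering the entries of $\lambda$. $\binom{n}{\lambda}=n!/(\lambda_1!\cdots\lambda_\theta!)$. The Young subgroup $\mathcal T_\lambda\subseteq\mathcal S_n$ consists of permutations fixing each of the sets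 $\{1,\dots,\lambda_1\}$, $\{\lambda_1+1,\dots,\lambda_1+\lambda_2\}$, etc. *)

theory Defs
  imports "HOL-Analysis.Analysis" "HOL-Combinatorics.Combinatorics"
begin

text \<open>Edges of the complete graph on V = {1..n}: unordered pairs, represented as (x,y) with x < y.\<close>
definition edges :: "nat \<Rightarrow> (nat \<times> nat) set" where
  "edges n = {(x,y). 1 \<le> x \<and> x < y \<and> y \<le> n}"

text \<open>Time-ordered composition of the transpositions of a word of edges
  (the earliest transposition is applied first).\<close>
definition word_perm :: "(nat \<times> nat) list \<Rightarrow> nat \<Rightarrow> nat" where
  "word_perm w = foldl (\<lambda>\<sigma> e. Transposition.transpose (fst e) (snd e) \<circ> \<sigma>) id w"

definition words :: "nat \<Rightarrow> nat \<Rightarrow> (nat \<times> nat) list set" where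
  "words n k = {w. length w = k \<and> set w \<subseteq> edges n}"

text \<open>Expectation of a functional G of \<sigma>(\<omega>), where \<omega> consists of independent rate-1
  Poisson processes on [0,\<beta>/n], one per edge.  Only the time-ordered word of edges of \<omega>
  matters; with t = \<beta>/n, each fixed word of length k occurs with probability
  exp(-|E| t) t^k / k!.\<close>
definition rp_expect :: "nat \<Rightarrow> real \<Rightarrow> ((nat \<Rightarrow> nat) \<Rightarrow> real) \<Rightarrow> real" where
  "rp_expect n \<beta> G =
     (\<Sum>k. exp (- real (card (edges n)) * (\<beta> / real n)) * (\<beta> / real n) ^ k / fact k
            * (\<Sum>w\<in>words n k. G (word_perm w)))"

definition rp_law :: "nat \<Rightarrow> real \<Rightarrow> (nat \<Rightarrow> nat) \<Rightarrow> real" where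
  "rp_law n \<beta> \<sigma> = rp_expect n \<beta> (\<lambda>\<tau>. if \<tau> = \<sigma> then 1 else 0)"

definition perm_cycles :: "nat \<Rightarrow> (nat \<Rightarrow> nat) \<Rightarrow> nat set set" where
  "perm_cycles n \<sigma> = (\<lambda>x. orbit \<sigma> x) ` {1..n}"

text \<open>Partitions of n into exactly \<theta> (possibly zero) parts, as lists of length \<theta>.\<close>
definition partitions_theta :: "nat \<Rightarrow> nat \<Rightarrow> nat list set" where
  "partitions_theta \<theta> n = {l. length l = \<theta> \<and> sum_list l = n \<and> sorted_wrt (\<ge>) l}"

definition reorderings :: "nat list \<Rightarrow> nat list set" where
  "reorderings l = {k. length k = length l \<and> mset k = mset l}"

definition multinom :: "nat \<Rightarrow> nat list \<Rightarrow> real" where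
  "multinom n l = fact n / (\<Prod>i<length l. fact (l ! i))"

definition block :: "nat list \<Rightarrow> nat \<Rightarrow> nat set" where
  "block l j = {sum_list (take j l) + 1 .. sum_list (take (Suc j) l)}"

definition young_subgroup :: "nat \<Rightarrow> nat list \<Rightarrow> (nat \<Rightarrow> nat) set" where
  "young_subgroup n l = {\<sigma>. \<sigma> permutes {1..n} \<and> (\<forall>j<length l. \<sigma> ` block l j = block l j)}"

end

theory Submission
  imports Defs
begin

lemma finite_edges: "finite (edges n)"
proof -
  have "edges n \<subseteq> {1..n} \<times> {1..n}" by (auto simp: edges_def)
  then show ?thesis by (rule finite_subset) auto
qed

lemma words_eq: "words n k = {xs. set xs \<subseteq> edges n \<and> length xs = k}"
  by (auto simp: words_def)

lemma finite_words: "finite (words n k)"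
  unfolding words_eq by (rule finite_lists_length_eq[OF finite_edges])

lemma card_words: "card (words n k) = card (edges n) ^ k"
  unfolding words_eq by (rule card_lists_length_eq[OF finite_edges])

lemma word_perm_snoc: "word_perm (w @ [e]) = Transposition.transpose (fst e) (snd e) \<circ> word_perm w"
  by (simp add: word_perm_def)

lemma word_perm_Nil: "word_perm [] = id"
  by (simp add: word_perm_def)

lemma word_perm_permutes: "set w \<subseteq> edges n \<Longrightarrow> word_perm w permutes {1..n}"
proof (induction w rule: rev_induct)
  case Nil
  then show ?case by (simp only: word_perm_Nil permutes_id)
next
  case (snoc e w)
  then have "fst e \<in> {1..n}" "snd e \<in> {1..n}" by (auto simp: edges_def split: prod.splits)
  then have "Transposition.transpose (fst e) (snd e) permutes {1..n}" by (rule permutes_swap_id)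
  moreover have "word_perm w permutes {1..n}" using snoc by auto
  ultimately show ?case unfolding word_perm_snoc by (blast intro: permutes_compose)
qed

lemma words_permutes: "w \<in> words n k \<Longrightarrow> word_perm w permutes {1..n}"
  by (rule word_perm_permutes) (auto simp: words_def)

definition coef :: "nat \<Rightarrow> real \<Rightarrow> nat \<Rightarrow> real" where
  "coef n \<beta> k = exp (- real (card (edges n)) * (\<beta> / real n)) * (\<beta> / real n) ^ k / fact k"

definition Sk :: "nat \<Rightarrow> nat \<Rightarrow> ((nat \<Rightarrow> nat) \<Rightarrow> real) \<Rightarrow> real" where
  "Sk n k G = (\<Sum>w\<in>words n k. G (word_perm w))"

lemma rp_expect_alt: "rp_expect n \<beta> G = (\<Sum>k. coef n \<beta> k * Sk n k G)"
  by (simp add: rp_expect_def coef_def Sk_def)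

lemma Sk_cong: "(\<And>\<sigma>. \<sigma> permutes {1..n} \<Longrightarrow> G \<sigma> = H \<sigma>) \<Longrightarrow> Sk n k G = Sk n k H"
  unfolding Sk_def by (intro sum.cong refl) (auto dest: words_permutes)

lemma rp_expect_cong: "(\<And>\<sigma>. \<sigma> permutes {1..n} \<Longrightarrow> G \<sigma> = H \<sigma>) \<Longrightarrow> rp_expect n \<beta> G = rp_expect n \<beta> H"
  unfolding rp_expect_alt using Sk_cong by metis

lemma coef_nonneg: "\<beta> \<ge> 0 \<Longrightarrow> coef n \<beta> k \<ge> 0"
  by (simp add: coef_def)

lemma Sk_bound:
  assumes "\<And>\<sigma>. \<sigma> permutes {1..n} \<Longrightarrow> \<bar>G \<sigma>\<bar> \<le> M"
  shows "\<bar>Sk n k G\<bar> \<le> M * real (card (edges n)) ^ k"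
proof -
  have "\<bar>Sk n k G\<bar> \<le> (\<Sum>w\<in>words n k. \<bar>G (word_perm w)\<bar>)"
    unfolding Sk_def by (rule sum_abs)
  also have "\<dots> \<le> (\<Sum>w\<in>words n k. M)"
    by (intro sum_mono assms words_permutes)
  also have "\<dots> = M * real (card (edges n)) ^ k"
    by (simp add: card_words)
  finally show ?thesis .
qed

lemma summable_Sk:
  assumes "\<beta> \<ge> 0" and "\<And>\<sigma>. \<sigma> permutes {1..n} \<Longrightarrow> \<bar>G \<sigma>\<bar> \<le> M"
  shows "summable (\<lambda>k. coef n \<beta> k * Sk n k G)"
proof (rule summable_comparison_test')
  let ?E = "real (card (edges n))" and ?t = "\<beta> / real n"
  show "summable (\<lambda>k. M * exp (- ?E * ?t) * (inverse (fact k) * (?E * ?t) ^ k))"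
    by (intro summable_mult summable_exp)
  fix k
  have "norm (coef n \<beta> k * Sk n k G) = coef n \<beta> k * \<bar>Sk n k G\<bar>"
    using coef_nonneg[OF assms(1)] by (simp add: abs_mult)
  also have "\<dots> \<le> coef n \<beta> k * (M * ?E ^ k)"
    by (intro mult_left_mono Sk_bound assms coef_nonneg) auto
  also have "\<dots> = M * exp (- ?E * ?t) * (inverse (fact k) * (?E * ?t) ^ k)"
    by (simp add: coef_def power_mult_distrib field_simps)
  finally show "norm (coef n \<beta> k * Sk n k G) \<le> M * exp (- ?E * ?t) * (inverse (fact k) * (?E * ?t) ^ k)" .
qed

lemma rp_expect_sum:
  assumes "\<beta> \<ge> 0" and "finite C"
    and "\<And>c \<sigma>. c \<in> C \<Longrightarrow> \<sigma> permutes {1..n} \<Longrightarrow> \<bar>F c \<sigma>\<bar> \<le> M c"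
  shows "rp_expect n \<beta> (\<lambda>\<sigma>. \<Sum>c\<in>C. F c \<sigma>) = (\<Sum>c\<in>C. rp_expect n \<beta> (F c))"
proof -
  have "rp_expect n \<beta> (\<lambda>\<sigma>. \<Sum>c\<in>C. F c \<sigma>) = (\<Sum>k. \<Sum>c\<in>C. coef n \<beta> k * Sk n k (F c))"
    unfolding rp_expect_alt Sk_def
    by (simp add: sum.swap[of _ C] sum_distrib_left)
  also have "\<dots> = (\<Sum>c\<in>C. \<Sum>k. coef n \<beta> k * Sk n k (F c))"
    by (rule suminf_sum) (rule summable_Sk[OF assms(1)], rule assms(3))
  finally show ?thesis unfolding rp_expect_alt .
qed

lemma rp_expect_scale:
  assumes "\<beta> \<ge> 0" and "\<And>\<sigma>. \<sigma> permutes {1..n} \<Longrightarrow> \<bar>G \<sigma>\<bar> \<le> M"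
  shows "rp_expect n \<beta> (\<lambda>\<sigma>. a * G \<sigma>) = a * rp_expect n \<beta> G"
proof -
  have "rp_expect n \<beta> (\<lambda>\<sigma>. a * G \<sigma>) = (\<Sum>k. a * (coef n \<beta> k * Sk n k G))"
    unfolding rp_expect_alt Sk_def by (simp add: sum_distrib_left algebra_simps)
  also have "\<dots> = a * (\<Sum>k. coef n \<beta> k * Sk n k G)"
    by (rule suminf_mult) (rule summable_Sk[OF assms])
  finally show ?thesis unfolding rp_expect_alt .
qed

lemma transpose_conj:
  assumes "bij q"
  shows "Transposition.transpose (q a) (q b) = q \<circ> Transposition.transpose a b \<circ> inv q"
proof
  fix x
  have 1: "inv q (q a) = a" "inv q (q b) = b" using assms by (simp_all add: bij_is_inj)
  have 3: "q (inv q x) = x" using assms by (meson bij_is_surj surj_f_inv_f)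
  from transpose_apply_commute[OF assms, of "q a" "q b" "inv q x"]
  show "Transposition.transpose (q a) (q b) x = (q \<circ> Transposition.transpose a b \<circ> inv q) x"
    unfolding 1 3 comp_def .
qed

definition emap :: "(nat \<Rightarrow> nat) \<Rightarrow> nat \<times> nat \<Rightarrow> nat \<times> nat" where
  "emap q e = (min (q (fst e)) (q (snd e)), max (q (fst e)) (q (snd e)))"

lemma emap_transpose:
  assumes "bij q"
  shows "Transposition.transpose (fst (emap q e)) (snd (emap q e)) = q \<circ> Transposition.transpose (fst e) (snd e) \<circ> inv q"
proof -
  have "Transposition.transpose (fst (emap q e)) (snd (emap q e)) = Transposition.transpose (q (fst e)) (q (snd e))"
    by (auto simp: emap_def min_def max_def transpose_commute)
  then show ?thesis using transpose_conj[OF assms] by simp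
qed

lemma word_perm_emap:
  assumes "bij q"
  shows "word_perm (map (emap q) w) = q \<circ> word_perm w \<circ> inv q"
proof (induction w rule: rev_induct)
  case Nil
  then show ?case using assms by (auto simp: word_perm_Nil fun_eq_iff surj_f_inv_f[OF bij_is_surj[OF assms]])
next
  case (snoc e w)
  have "word_perm (map (emap q) (w @ [e])) = (q \<circ> Transposition.transpose (fst e) (snd e) \<circ> inv q) \<circ> (q \<circ> word_perm w \<circ> inv q)"
    by (simp only: map_append list.map word_perm_snoc emap_transpose[OF assms] snoc.IH)
  also have "\<dots> = q \<circ> word_perm (w @ [e]) \<circ> inv q"
    using assms by (simp add: word_perm_snoc fun_eq_iff bij_is_inj)
  finally show ?case .
qed

lemma emap_edges:
  assumes "q permutes {1..n}" "e \<in> edges n"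
  shows "emap q e \<in> edges n"
proof -
  obtain a b where e: "e = (a, b)" "1 \<le> a" "a < b" "b \<le> n" using assms(2) by (auto simp: edges_def)
  have "inj q" using permutes_inj[OF assms(1)] .
  then have "q a \<noteq> q b" using e(3) unfolding inj_def by (metis less_irrefl)
  moreover have "a \<in> {1..n}" "b \<in> {1..n}" using e by auto
  then have "q a \<in> {1..n}" "q b \<in> {1..n}" using permutes_in_image[OF assms(1)] by blast+
  ultimately show ?thesis unfolding emap_def edges_def e by (cases "q a < q b") (auto simp: min_def max_def)
qed

lemma emap_inv:
  assumes "q permutes {1..n}" "e \<in> edges n"
  shows "emap (inv q) (emap q e) = e"
proof -
  obtain a b where e: "e = (a, b)" "a < b" using assms(2) by (auto simp: edges_def)
  have i: "inv q (q x) = x" for x using permutes_inverses(2)[OF assms(1)] by simp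
  show ?thesis using e by (auto simp: emap_def min_def max_def i)
qed

lemma Sk_conj:
  assumes "q permutes {1..n}"
  shows "Sk n k (\<lambda>\<sigma>. G (q \<circ> \<sigma> \<circ> inv q)) = Sk n k G"
proof -
  have bq: "bij q" using assms by (rule permutes_bij)
  have iq: "inv q permutes {1..n}" using assms by (rule permutes_inv)
  have iiq: "inv (inv q) = q" using bq by (simp add: inv_inv_eq)
  have "Sk n k (\<lambda>\<sigma>. G (q \<circ> \<sigma> \<circ> inv q)) = (\<Sum>w\<in>words n k. G (word_perm (map (emap q) w)))"
    unfolding Sk_def by (simp add: word_perm_emap[OF bq])
  also have "\<dots> = (\<Sum>w\<in>words n k. G (word_perm w))"
  proof (rule sum.reindex_bij_witness[where j = "map (emap q)" and i = "map (emap (inv q))"])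
    fix w assume "w \<in> words n k"
    then have "\<forall>e\<in>set w. emap (inv q) (emap q e) = e" using emap_inv[OF assms] by (auto simp: words_def)
    then show "map (emap (inv q)) (map (emap q) w) = w"
      by (induction w) auto
    show "map (emap q) w \<in> words n k" using \<open>w \<in> words n k\<close> emap_edges[OF assms]
      by (auto simp: words_def)
  next
    fix w assume "w \<in> words n k"
    then have "\<forall>e\<in>set w. emap (inv (inv q)) (emap (inv q) e) = e" using emap_inv[OF iq] by (auto simp: words_def)
    then have "\<forall>e\<in>set w. emap q (emap (inv q) e) = e" unfolding iiq .
    then show "map (emap q) (map (emap (inv q)) w) = w"
      by (induction w) auto
    show "map (emap (inv q)) w \<in> words n k" using \<open>w \<in> words n k\<close> emap_edges[OF iq]
      by (auto simp: words_def)
  next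
    fix w assume "w \<in> words n k"
    show "G (word_perm (map (emap q) w)) = G (word_perm (map (emap q) w))" by simp
  qed
  finally show ?thesis unfolding Sk_def .
qed

lemma rp_expect_conj:
  assumes "q permutes {1..n}"
  shows "rp_expect n \<beta> (\<lambda>\<sigma>. G (q \<circ> \<sigma> \<circ> inv q)) = rp_expect n \<beta> G"
  unfolding rp_expect_alt Sk_conj[OF assms] ..

definition pres :: "nat \<Rightarrow> (nat \<Rightarrow> nat) \<Rightarrow> (nat \<Rightarrow> nat) \<Rightarrow> bool" where
  "pres n c \<sigma> \<longleftrightarrow> (\<forall>x\<in>{1..n}. c (\<sigma> x) = c x)"

locale permN =
  fixes n :: nat and \<sigma> :: "nat \<Rightarrow> nat"
  assumes perm: "\<sigma> permutes {1..n}"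
begin

lemma permutation: "permutation \<sigma>"
  using perm by (auto intro: permutes_imp_permutation)

lemma self_in: "x \<in> orbit \<sigma> x"
  by (rule permutation_self_in_orbit[OF permutation])

lemma orbit_sub: "x \<in> {1..n} \<Longrightarrow> orbit \<sigma> x \<subseteq> {1..n}"
proof
  fix y assume x: "x \<in> {1..n}" and y: "y \<in> orbit \<sigma> x"
  from y show "y \<in> {1..n}"
  proof (induction rule: orbit.induct)
    case base then show ?case using perm x by (metis permutes_in_image)
  next
    case (step y) then show ?case using perm by (metis permutes_in_image)
  qed
qed

lemma finite_orbit': "finite (orbit \<sigma> x)"
  by (rule finite_orbit[OF self_in])

lemma orbit_eq: "y \<in> orbit \<sigma> x \<Longrightarrow> orbit \<sigma> y = orbit \<sigma> x"
proof
  assume y: "y \<in> orbit \<sigma> x"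
  show "orbit \<sigma> y \<subseteq> orbit \<sigma> x" using y by (auto intro: orbit_trans)
  have "x \<in> orbit \<sigma> y" by (rule orbit_swap[OF self_in y])
  then show "orbit \<sigma> x \<subseteq> orbit \<sigma> y" by (auto intro: orbit_trans)
qed

lemma orbit_step': "orbit \<sigma> (\<sigma> x) = orbit \<sigma> x"
  by (rule permutation_orbit_step[OF permutation])

lemma pres_const:
  assumes "pres n c \<sigma>" "x \<in> {1..n}" "y \<in> orbit \<sigma> x"
  shows "c y = c x"
  using assms(3)
proof (induction rule: orbit.induct)
  case base then show ?case using assms(1,2) by (simp add: pres_def)
next
  case (step y)
  have "y \<in> {1..n}" using orbit_sub[OF assms(2)] step.hyps by auto
  then show ?case using assms(1) step.IH by (simp add: pres_def)
qed

lemma cycles_prod: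
  fixes a :: "nat \<Rightarrow> real"
  shows "(\<Prod>\<gamma>\<in>perm_cycles n \<sigma>. (\<Sum>i<\<theta>. a i ^ card \<gamma>))
     = (\<Sum>c\<in>{c\<in>PiE {1..n} (\<lambda>_. {..<\<theta>}). pres n c \<sigma>}. \<Prod>x\<in>{1..n}. a (c x))"
proof -
  let ?N = "{1..n::nat}"
  let ?C = "perm_cycles n \<sigma>"
  have C: "?C = (\<lambda>x. orbit \<sigma> x) ` ?N" by (simp add: perm_cycles_def)
  have finC: "finite ?C" unfolding C by simp
  have Csub: "\<gamma> \<subseteq> ?N" if "\<gamma> \<in> ?C" for \<gamma> using that orbit_sub unfolding C by blast
  have Cne: "\<gamma> \<noteq> {}" if "\<gamma> \<in> ?C" for \<gamma> using that self_in unfolding C by auto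
  have Corb: "orbit \<sigma> x = \<gamma>" if "\<gamma> \<in> ?C" "x \<in> \<gamma>" for \<gamma> x
    using that orbit_eq unfolding C by auto
  have UC: "\<Union>?C = ?N" using Csub self_in unfolding C by blast
  have disj: "\<forall>A\<in>?C. \<forall>B\<in>?C. A \<noteq> B \<longrightarrow> A \<inter> B = {}"
    using Corb by blast
  have finCe: "\<forall>A\<in>?C. finite A" using finite_orbit' unfolding C by auto
  have "(\<Prod>\<gamma>\<in>?C. (\<Sum>i<\<theta>. a i ^ card \<gamma>)) = (\<Sum>g\<in>PiE ?C (\<lambda>_. {..<\<theta>}). \<Prod>\<gamma>\<in>?C. a (g \<gamma>) ^ card \<gamma>)"
    by (rule prod_sum_PiE[OF finC]) auto
  also have "\<dots> = (\<Sum>c\<in>{c\<in>PiE ?N (\<lambda>_. {..<\<theta>}). pres n c \<sigma>}. \<Prod>x\<in>?N. a (c x))"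
  proof (rule sum.reindex_bij_witness[where j = "\<lambda>g x. if x \<in> ?N then g (orbit \<sigma> x) else undefined"
        and i = "\<lambda>c \<gamma>. if \<gamma> \<in> ?C then c (SOME x. x \<in> \<gamma>) else undefined"])
    fix g assume g: "g \<in> PiE ?C (\<lambda>_. {..<\<theta>})"
    show "(\<lambda>\<gamma>. if \<gamma> \<in> ?C then (if (SOME x. x \<in> \<gamma>) \<in> ?N then g (orbit \<sigma> (SOME x. x \<in> \<gamma>)) else undefined) else undefined) = g"
    proof
      fix \<gamma>
      show "(if \<gamma> \<in> ?C then (if (SOME x. x \<in> \<gamma>) \<in> ?N then g (orbit \<sigma> (SOME x. x \<in> \<gamma>)) else undefined) else undefined) = g \<gamma>"
      proof (cases "\<gamma> \<in> ?C")
        case True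
        then have s: "(SOME x. x \<in> \<gamma>) \<in> \<gamma>" using Cne by (simp add: some_in_eq)
        then have "(SOME x. x \<in> \<gamma>) \<in> ?N" using Csub True by blast
        then show ?thesis using True Corb s by simp
      next
        case False then show ?thesis using g by auto
      qed
    qed
    show "(\<lambda>x. if x \<in> ?N then g (orbit \<sigma> x) else undefined) \<in> {c\<in>PiE ?N (\<lambda>_. {..<\<theta>}). pres n c \<sigma>}"
    proof -
      have "g (orbit \<sigma> x) \<in> {..<\<theta>}" if "x \<in> ?N" for x using g that unfolding C by auto
      moreover have "\<sigma> x \<in> ?N" if "x \<in> ?N" for x using that perm by (metis permutes_in_image)
      ultimately show ?thesis by (auto simp: pres_def orbit_step')
    qed
    have "(\<Prod>x\<in>?N. a (if x \<in> ?N then g (orbit \<sigma> x) else undefined)) = (\<Prod>x\<in>\<Union>?C. a (g (orbit \<sigma> x)))"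
      unfolding UC by (rule prod.cong) auto
    also have "\<dots> = (\<Prod>\<gamma>\<in>?C. \<Prod>x\<in>\<gamma>. a (g (orbit \<sigma> x)))"
      using prod.Union_disjoint[OF finCe disj] by simp
    also have "\<dots> = (\<Prod>\<gamma>\<in>?C. a (g \<gamma>) ^ card \<gamma>)"
      by (rule prod.cong) (auto simp: Corb)
    finally show "(\<Prod>x\<in>?N. a (if x \<in> ?N then g (orbit \<sigma> x) else undefined)) = (\<Prod>\<gamma>\<in>?C. a (g \<gamma>) ^ card \<gamma>)" .
  next
    fix c assume c: "c \<in> {c\<in>PiE ?N (\<lambda>_. {..<\<theta>}). pres n c \<sigma>}"
    show "(\<lambda>x. if x \<in> ?N then (if orbit \<sigma> x \<in> ?C then c (SOME y. y \<in> orbit \<sigma> x) else undefined) else undefined) = c"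
    proof
      fix x
      show "(if x \<in> ?N then (if orbit \<sigma> x \<in> ?C then c (SOME y. y \<in> orbit \<sigma> x) else undefined) else undefined) = c x"
      proof (cases "x \<in> ?N")
        case True
        have "(SOME y. y \<in> orbit \<sigma> x) \<in> orbit \<sigma> x" using self_in by (rule someI)
        then have "c (SOME y. y \<in> orbit \<sigma> x) = c x" using pres_const[of c x] c True by auto
        then show ?thesis using True unfolding C by auto
      next
        case False then show ?thesis using c by auto
      qed
    qed
    show "(\<lambda>\<gamma>. if \<gamma> \<in> ?C then c (SOME x. x \<in> \<gamma>) else undefined) \<in> PiE ?C (\<lambda>_. {..<\<theta>})"
    proof -
      have "c (SOME x. x \<in> \<gamma>) \<in> {..<\<theta>}" if "\<gamma> \<in> ?C" for \<gamma>
      proof -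
        have "(SOME x. x \<in> \<gamma>) \<in> \<gamma>" using Cne[OF that] by (simp add: some_in_eq)
        then have "(SOME x. x \<in> \<gamma>) \<in> ?N" using Csub[OF that] by auto
        then show ?thesis using c by auto
      qed
      then show ?thesis by auto
    qed
  qed
  finally show ?thesis .
qed

end

definition ps :: "nat list \<Rightarrow> nat \<Rightarrow> nat" where
  "ps l j = sum_list (take j l)"

definition blk :: "nat list \<Rightarrow> nat \<Rightarrow> nat" where
  "blk l x = (LEAST j. x \<le> ps l (Suc j))"

lemma ps_Suc: "ps l (Suc j) = ps l j + (if j < length l then l ! j else 0)"
  by (simp add: ps_def take_Suc_conv_app_nth)

lemma ps_mono: "j \<le> j' \<Longrightarrow> ps l j \<le> ps l j'"
proof (induction j' rule: dec_induct)
  case (step k) then show ?case using ps_Suc[of l k] by simp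
qed simp

lemma ps_0: "ps l 0 = 0" by (simp add: ps_def)

lemma ps_len: "length l \<le> j \<Longrightarrow> ps l j = sum_list l" by (simp add: ps_def)

lemma block_ps: "block l j = {ps l j + 1 .. ps l (Suc j)}"
  by (simp add: block_def ps_def)

lemma card_block: "j < length l \<Longrightarrow> card (block l j) = l ! j"
  by (simp add: block_ps ps_Suc)

lemma block_sub: "sum_list l = n \<Longrightarrow> block l j \<subseteq> {1..n}"
proof -
  assume "sum_list l = n"
  then have "ps l (Suc j) \<le> n" using ps_mono[of "Suc j" "max (Suc j) (length l)" l] ps_len[of l "max (Suc j) (length l)"] by simp
  then show ?thesis by (auto simp: block_ps)
qed

lemma blk_eq: assumes "x \<in> block l j" shows "blk l x = j"
  unfolding blk_def
proof (rule Least_equality)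
  show "x \<le> ps l (Suc j)" using assms by (simp add: block_ps)
  fix j' assume "x \<le> ps l (Suc j')"
  show "j \<le> j'"
  proof (rule ccontr)
    assume "\<not> j \<le> j'"
    then have "ps l (Suc j') \<le> ps l j" by (intro ps_mono) simp
    then show False using assms \<open>x \<le> ps l (Suc j')\<close> by (simp add: block_ps)
  qed
qed

lemma blk_in:
  assumes "sum_list l = n" "x \<in> {1..n}"
  shows "blk l x < length l \<and> x \<in> block l (blk l x)"
proof -
  have ex: "x \<le> ps l (Suc (length l))" using assms by (simp add: ps_len)
  define j where "j = blk l x"
  have j1: "x \<le> ps l (Suc j)" unfolding j_def blk_def by (rule LeastI[of "\<lambda>j. x \<le> ps l (Suc j)" "length l", OF ex])
  have j2: "ps l j < x"
  proof (cases j)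
    case 0 then show ?thesis using assms by (simp add: ps_0)
  next
    case (Suc j0)
    have "\<not> x \<le> ps l (Suc j0)"
    proof
      assume "x \<le> ps l (Suc j0)"
      then have "j \<le> j0" unfolding j_def blk_def by (rule Least_le)
      then show False using Suc by simp
    qed
    then show ?thesis using Suc by simp
  qed
  have "j < length l"
  proof (rule ccontr)
    assume "\<not> j < length l"
    then have "ps l j = n" using assms by (simp add: ps_len)
    then show False using j2 assms by simp
  qed
  moreover have "x \<in> block l j" using j1 j2 by (simp add: block_ps)
  ultimately show ?thesis by (simp add: j_def)
qed

lemma blk_fiber:
  assumes "sum_list l = n" "j < length l"
  shows "{x\<in>{1..n}. blk l x = j} = block l j"
  using blk_in[OF assms(1)] blk_eq block_sub[OF assms(1)] by blast

lemma pres_blk_iff: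
  assumes "sum_list l = n" "\<tau> permutes {1..n}"
  shows "pres n (blk l) \<tau> \<longleftrightarrow> \<tau> \<in> young_subgroup n l"
proof
  assume p: "pres n (blk l) \<tau>"
  have "\<tau> ` block l j = block l j" if j: "j < length l" for j
  proof -
    have sub: "\<tau> ` block l j \<subseteq> block l j"
    proof
      fix y assume "y \<in> \<tau> ` block l j"
      then obtain x where x: "x \<in> block l j" "y = \<tau> x" by auto
      have xN: "x \<in> {1..n}" using x block_sub[OF assms(1), of j] by blast
      then have yN: "y \<in> {1..n}" using x assms(2) by (metis permutes_in_image)
      have "blk l y = blk l x" using p xN x by (simp add: pres_def)
      also have "\<dots> = j" using blk_eq[OF x(1)] .
      finally show "y \<in> block l j" using blk_in[OF assms(1) yN] by simp
    qed
    have "inj_on \<tau> (block l j)" using permutes_inj[OF assms(2)] by (metis inj_on_subset subset_UNIV)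
    then have "card (\<tau> ` block l j) = card (block l j)" by (rule card_image)
    then show ?thesis using sub by (intro card_subset_eq) (auto simp: block_ps)
  qed
  then show "\<tau> \<in> young_subgroup n l" using assms(2) by (simp add: young_subgroup_def)
next
  assume "\<tau> \<in> young_subgroup n l"
  then have im: "\<And>j. j < length l \<Longrightarrow> \<tau> ` block l j = block l j" by (simp add: young_subgroup_def)
  show "pres n (blk l) \<tau>" unfolding pres_def
  proof
    fix x assume x: "x \<in> {1..n}"
    have b: "blk l x < length l" "x \<in> block l (blk l x)" using blk_in[OF assms(1) x] by auto
    then have "\<tau> x \<in> block l (blk l x)" using im[OF b(1)] by blast
    then show "blk l (\<tau> x) = blk l x" by (rule blk_eq)
  qed
qed

lemma fiber_bij:
  assumes "finite A" "finite A'" "\<forall>y. card {x\<in>A. f x = y} = card {x\<in>A'. g x = y}"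
  shows "\<exists>h. bij_betw h A A' \<and> (\<forall>x\<in>A. f x = g (h x))"
  using assms
proof (induction A arbitrary: A' rule: finite_induct)
  case empty
  have "A' = {}"
  proof (rule ccontr)
    assume "A' \<noteq> {}"
    then obtain x where x: "x \<in> A'" by auto
    have "card {x'\<in>A'. g x' = g x} = 0" using empty.prems(2)[rule_format, of "g x"] by simp
    moreover have "finite {x'\<in>A'. g x' = g x}" using empty.prems(1) by simp
    ultimately show False using x by auto
  qed
  then show ?case by (intro exI[of _ "\<lambda>_. undefined"]) (simp add: bij_betw_def)
next
  case (insert a A0)
  have "card {x\<in>insert a A0. f x = f a} \<noteq> 0" using insert.hyps(1) by auto
  then have "card {x\<in>A'. g x = f a} \<noteq> 0" using insert.prems(2)[rule_format, of "f a"] by linarith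
  then have "{x\<in>A'. g x = f a} \<noteq> {}" by (metis card.empty)
  then obtain b where b: "b \<in> A'" "g b = f a" by blast
  have "\<forall>y. card {x\<in>A0. f x = y} = card {x\<in>A' - {b}. g x = y}"
  proof
    fix y
    have e1: "card {x\<in>insert a A0. f x = y} = card {x\<in>A0. f x = y} + (if f a = y then 1 else 0)"
    proof (cases "f a = y")
      case True
      then have "{x\<in>insert a A0. f x = y} = insert a {x\<in>A0. f x = y}" by auto
      then show ?thesis using True insert.hyps by simp
    next
      case False
      then have "{x\<in>insert a A0. f x = y} = {x\<in>A0. f x = y}" by auto
      then show ?thesis using False by simp
    qed
    have e2: "card {x\<in>A'. g x = y} = card {x\<in>A' - {b}. g x = y} + (if f a = y then 1 else 0)"
    proof (cases "f a = y")
      case True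
      then have "{x\<in>A'. g x = y} = insert b {x\<in>A' - {b}. g x = y}" using b by auto
      then show ?thesis using True insert.prems(1) by simp
    next
      case False
      then have "{x\<in>A'. g x = y} = {x\<in>A' - {b}. g x = y}" using b by auto
      then show ?thesis using False by simp
    qed
    show "card {x\<in>A0. f x = y} = card {x\<in>A' - {b}. g x = y}"
      using e1 e2 insert.prems(2)[rule_format, of y] by linarith
  qed
  then obtain h0 where h0: "bij_betw h0 A0 (A' - {b})" "\<forall>x\<in>A0. f x = g (h0 x)"
    using insert.IH[of "A' - {b}"] insert.prems(1) by auto
  define h where "h = h0(a := b)"
  have "bij_betw h A0 (A' - {b}) = bij_betw h0 A0 (A' - {b})"
    using insert.hyps(2) unfolding h_def by (intro bij_betw_cong) auto
  then have "bij_betw h A0 (A' - {b})" using h0(1) by simp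
  moreover have "bij_betw h {a} {b}" by (simp add: h_def)
  ultimately have "bij_betw h (A0 \<union> {a}) ((A' - {b}) \<union> {b})" by (rule bij_betw_combine) auto
  moreover have "A0 \<union> {a} = insert a A0" "(A' - {b}) \<union> {b} = A'" using b by auto
  ultimately have "bij_betw h (insert a A0) A'" by simp
  moreover have "\<forall>x\<in>insert a A0. f x = g (h x)" using h0(2) b insert.hyps(2) by (auto simp: h_def)
  ultimately show ?case by blast
qed

lemma fiber_perm:
  assumes "finite A" "\<forall>y. card {x\<in>A. f x = y} = card {x\<in>A. g x = y}"
  shows "\<exists>q. q permutes A \<and> (\<forall>x\<in>A. f x = g (q x))"
proof -
  obtain h where h: "bij_betw h A A" "\<forall>x\<in>A. f x = g (h x)" using fiber_bij[OF assms(1,1,2)] by blast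
  define q where "q x = (if x \<in> A then h x else x)" for x
  have "bij_betw q A A = bij_betw h A A" unfolding q_def by (intro bij_betw_cong) auto
  then have "bij_betw q A A" using h(1) by simp
  then have "q permutes A" by (rule bij_imp_permutes) (simp add: q_def)
  moreover have "\<forall>x\<in>A. f x = g (q x)" using h(2) by (simp add: q_def)
  ultimately show ?thesis by blast
qed

definition cnt :: "nat \<Rightarrow> nat \<Rightarrow> (nat \<Rightarrow> nat) \<Rightarrow> nat list" where
  "cnt n \<theta> c = map (\<lambda>i. card {x\<in>{1..n}. c x = i}) [0..<\<theta>]"

definition sortd :: "nat list \<Rightarrow> nat list" where
  "sortd xs = rev (sort xs)"

lemma length_cnt[simp]: "length (cnt n \<theta> c) = \<theta>" by (simp add: cnt_def)

lemma nth_cnt: "i < \<theta> \<Longrightarrow> cnt n \<theta> c ! i = card {x\<in>{1..n}. c x = i}" by (simp add: cnt_def)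

lemma sum_cnt:
  assumes "c \<in> PiE {1..n} (\<lambda>_. {..<\<theta>})"
  shows "sum_list (cnt n \<theta> c) = n"
proof -
  have "sum_list (cnt n \<theta> c) = (\<Sum>i\<in>{..<\<theta>}. card {x\<in>{1..n}. c x = i})"
    by (simp add: cnt_def interv_sum_list_conv_sum_set_nat lessThan_atLeast0)
  also have "\<dots> = (\<Sum>i\<in>{..<\<theta>}. \<Sum>x\<in>{x\<in>{1..n}. c x = i}. (1::nat))" by simp
  also have "\<dots> = (\<Sum>x\<in>{1..n}. (1::nat))"
    by (rule sum.group) (use assms in auto)
  finally show ?thesis by simp
qed

lemma mset_sortd[simp]: "mset (sortd xs) = mset xs" by (simp add: sortd_def)
lemma length_sortd[simp]: "length (sortd xs) = length xs" by (simp add: sortd_def)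
lemma sum_sortd[simp]: "sum_list (sortd xs) = sum_list xs"
  by (metis mset_sortd sum_mset_sum_list)

lemma finite_young: "finite (young_subgroup n l)"
proof -
  have "young_subgroup n l \<subseteq> {\<sigma>. \<sigma> permutes {1..n}}" by (auto simp: young_subgroup_def)
  then show ?thesis by (rule finite_subset) (simp add: finite_permutations)
qed

lemma young_sum:
  assumes "\<beta> \<ge> 0"
  shows "(\<Sum>\<sigma>\<in>young_subgroup n l. rp_law n \<beta> \<sigma>) = rp_expect n \<beta> (\<lambda>\<tau>. if \<tau> \<in> young_subgroup n l then 1 else 0)"
proof -
  have "(\<Sum>\<sigma>\<in>young_subgroup n l. rp_law n \<beta> \<sigma>) = rp_expect n \<beta> (\<lambda>\<tau>. \<Sum>\<sigma>\<in>young_subgroup n l. if \<tau> = \<sigma> then 1 else 0)"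
    unfolding rp_law_def
    by (rule rp_expect_sum[OF assms finite_young, where M = "\<lambda>_. 1", symmetric]) auto
  also have "\<dots> = rp_expect n \<beta> (\<lambda>\<tau>. if \<tau> \<in> young_subgroup n l then 1 else 0)"
    using finite_young by simp
  finally show ?thesis .
qed

lemma S3:
  assumes "\<beta> \<ge> 0" and c: "c \<in> PiE {1..n} (\<lambda>_. {..<\<theta>})"
  shows "rp_expect n \<beta> (\<lambda>\<sigma>. if pres n c \<sigma> then 1 else 0)
       = (\<Sum>\<sigma>\<in>young_subgroup n (sortd (cnt n \<theta> c)). rp_law n \<beta> \<sigma>)"
proof -
  let ?N = "{1..n::nat}"
  define \<kappa> where "\<kappa> = cnt n \<theta> c"
  define lam where "lam = sortd \<kappa>"
  have lk: "length \<kappa> = \<theta>" by (simp add: \<kappa>_def)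
  have sl: "sum_list lam = n" using sum_cnt[OF c] by (simp add: lam_def \<kappa>_def)
  have "mset lam = mset \<kappa>" by (simp add: lam_def)
  then obtain \<rho> where \<rho>: "\<rho> permutes {..<length \<kappa>}" "permute_list \<rho> \<kappa> = lam"
    by (rule mset_eq_permutation)
  have \<rho>p: "\<rho> permutes {..<\<theta>}" using \<rho>(1) lk by simp
  have ll: "length lam = \<theta>" by (simp add: lam_def lk)
  have lamnth: "lam ! j = \<kappa> ! (\<rho> j)" if "j < \<theta>" for j
    using permute_list_nth[OF \<rho>(1), of j] that lk \<rho>(2) by simp
  define c' where "c' x = \<rho> (blk lam x)" for x
  have fib: "\<forall>y. card {x\<in>?N. c x = y} = card {x\<in>?N. c' x = y}"
  proof
    fix y
    show "card {x\<in>?N. c x = y} = card {x\<in>?N. c' x = y}"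
    proof (cases "y < \<theta>")
      case True
      define j where "j = inv \<rho> y"
      have j: "j < \<theta>" "\<rho> j = y" using True \<rho>p unfolding j_def
        by (metis lessThan_iff permutes_inverses(1) permutes_in_image permutes_inv)+
      have "{x\<in>?N. c' x = y} = {x\<in>?N. blk lam x = j}"
        using permutes_inj[OF \<rho>p] j(2) unfolding c'_def by (auto simp: inj_eq)
      also have "\<dots> = block lam j" using blk_fiber[OF sl] j ll by simp
      finally have "card {x\<in>?N. c' x = y} = lam ! j" using card_block[of j lam] j ll by simp
      also have "\<dots> = \<kappa> ! y" using lamnth[OF j(1)] j by simp
      also have "\<dots> = card {x\<in>?N. c x = y}" using True by (simp add: \<kappa>_def nth_cnt)
      finally show ?thesis by simp
    next
      case False
      have "{x\<in>?N. c x = y} = {}" using c False by fastforce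
      moreover have "{x\<in>?N. c' x = y} = {}"
      proof -
        have "c' x < \<theta>" if "x \<in> ?N" for x
          using blk_in[OF sl that] ll permutes_in_image[OF \<rho>p] unfolding c'_def by auto
        then show ?thesis using False by fastforce
      qed
      ultimately show ?thesis by (simp only: card.empty)
    qed
  qed
  obtain q where q: "q permutes ?N" "\<forall>x\<in>?N. c x = c' (q x)"
    using fiber_perm[OF _ fib] by auto
  have key: "pres n c \<sigma> \<longleftrightarrow> q \<circ> \<sigma> \<circ> inv q \<in> young_subgroup n lam" if \<sigma>: "\<sigma> permutes ?N" for \<sigma>
  proof -
    have \<tau>: "q \<circ> \<sigma> \<circ> inv q permutes ?N"
      by (intro permutes_compose permutes_inv q(1) \<sigma>)
    have qi: "q (inv q y) = y" "inv q (q y) = y" for y using permutes_inverses[OF q(1)] by auto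
    have iN: "inv q y \<in> ?N \<longleftrightarrow> y \<in> ?N" for y using permutes_in_image[OF permutes_inv[OF q(1)]] .
    have qN: "q y \<in> ?N \<longleftrightarrow> y \<in> ?N" for y using permutes_in_image[OF q(1)] .
    have sN: "\<sigma> y \<in> ?N \<longleftrightarrow> y \<in> ?N" for y using permutes_in_image[OF \<sigma>] .
    have "pres n c \<sigma> \<longleftrightarrow> pres n c' (q \<circ> \<sigma> \<circ> inv q)"
    proof
      assume p: "pres n c \<sigma>"
      show "pres n c' (q \<circ> \<sigma> \<circ> inv q)" unfolding pres_def
      proof
        fix y assume y: "y \<in> ?N"
        define x where "x = inv q y"
        have x: "x \<in> ?N" "q x = y" using y iN qi unfolding x_def by auto
        have "c' ((q \<circ> \<sigma> \<circ> inv q) y) = c' (q (\<sigma> x))" by (simp add: x_def)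
        also have "\<dots> = c (\<sigma> x)" using q(2) sN x by auto
        also have "\<dots> = c x" using p x by (simp add: pres_def)
        also have "\<dots> = c' y" using q(2) x by auto
        finally show "c' ((q \<circ> \<sigma> \<circ> inv q) y) = c' y" .
      qed
    next
      assume p: "pres n c' (q \<circ> \<sigma> \<circ> inv q)"
      show "pres n c \<sigma>" unfolding pres_def
      proof
        fix x assume x: "x \<in> ?N"
        have "c (\<sigma> x) = c' (q (\<sigma> x))" using q(2) sN x by auto
        also have "\<dots> = c' ((q \<circ> \<sigma> \<circ> inv q) (q x))" by (simp add: qi)
        also have "\<dots> = c' (q x)" using p x qN by (simp add: pres_def)
        also have "\<dots> = c x" using q(2) x by auto
        finally show "c (\<sigma> x) = c x" .
      qed
    qed
    also have "\<dots> \<longleftrightarrow> pres n (blk lam) (q \<circ> \<sigma> \<circ> inv q)"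
      using permutes_inj[OF \<rho>p] unfolding pres_def c'_def by (simp add: inj_eq)
    also have "\<dots> \<longleftrightarrow> q \<circ> \<sigma> \<circ> inv q \<in> young_subgroup n lam"
      by (rule pres_blk_iff[OF sl \<tau>])
    finally show ?thesis .
  qed
  have "rp_expect n \<beta> (\<lambda>\<sigma>. if pres n c \<sigma> then 1 else 0)
      = rp_expect n \<beta> (\<lambda>\<sigma>. (\<lambda>\<tau>. if \<tau> \<in> young_subgroup n lam then 1 else 0) (q \<circ> \<sigma> \<circ> inv q))"
    by (rule rp_expect_cong) (simp add: key)
  also have "\<dots> = rp_expect n \<beta> (\<lambda>\<tau>. if \<tau> \<in> young_subgroup n lam then 1 else 0)"
    by (rule rp_expect_conj[OF q(1)])
  also have "\<dots> = (\<Sum>\<sigma>\<in>young_subgroup n lam. rp_law n \<beta> \<sigma>)"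
    by (rule young_sum[OF assms(1), symmetric])
  finally show ?thesis by (simp add: lam_def \<kappa>_def)
qed

lemma prod_fact_mset:
  "(\<Prod>i<length k. fact (k ! i) :: real) = prod_mset (image_mset fact (mset k))"
proof -
  have "(\<Prod>i<length k. fact (k ! i) :: real) = prod_list (map fact k)"
    by (simp add: prod.list_conv_set_nth lessThan_atLeast0)
  also have "\<dots> = prod_mset (mset (map fact k))" by (simp only: prod_mset_prod_list)
  finally show ?thesis by (simp only: mset_map)
qed

lemma multinom_mset: "mset k = mset l \<Longrightarrow> multinom n k = multinom n l"
  unfolding multinom_def prod_fact_mset by simp

definition cmset :: "nat \<Rightarrow> nat list \<Rightarrow> nat multiset" where
  "cmset \<theta> k = (\<Sum>i<\<theta>. replicate_mset (k ! i) i)"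

lemma count_cmset: "count (cmset \<theta> k) x = (if x < \<theta> then k ! x else 0)"
  by (simp add: cmset_def count_sum)

lemma size_sum_mset': "size (\<Sum>i\<in>I. (M i :: 'b multiset)) = (\<Sum>i\<in>I. size (M i))"
  by (induction I rule: infinite_finite_induct) auto

lemma size_cmset: "length k = \<theta> \<Longrightarrow> size (cmset \<theta> k) = sum_list k"
  by (simp add: cmset_def size_sum_mset' sum_list_sum_nth lessThan_atLeast0)

lemma set_cmset: "set_mset (cmset \<theta> k) \<subseteq> {..<\<theta>}"
  using count_cmset[of \<theta> k] by (auto simp: set_mset_def split: if_splits)

lemma mset_map_col:
  "count (mset (map c [1..<Suc n])) i = card {x\<in>{1..n}. c x = i}"
proof -
  have "mset (map c [1..<Suc n]) = image_mset c (mset_set {1..n})"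
    by (simp only: mset_map mset_upt atLeastLessThanSuc_atLeastAtMost)
  then show ?thesis by (simp add: count_image_mset_eq_card_vimage)
qed

lemma cnt_iff_mset:
  assumes c: "c \<in> PiE {1..n} (\<lambda>_. {..<\<theta>})" and lk: "length k = \<theta>"
  shows "cnt n \<theta> c = k \<longleftrightarrow> mset (map c [1..<Suc n]) = cmset \<theta> k"
proof
  assume "cnt n \<theta> c = k"
  then have "count (mset (map c [1..<Suc n])) i = count (cmset \<theta> k) i" for i
  proof (cases "i < \<theta>")
    case True
    have "count (mset (map c [1..<Suc n])) i = card {x\<in>{1..n}. c x = i}" by (rule mset_map_col)
    also have "\<dots> = cnt n \<theta> c ! i" using True by (simp add: nth_cnt)
    also have "\<dots> = count (cmset \<theta> k) i" using True \<open>cnt n \<theta> c = k\<close> by (simp add: count_cmset)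
    finally show ?thesis .
  next
    case False
    then have "{x\<in>{1..n}. c x = i} = {}" using c by fastforce
    then show ?thesis using False by (simp only: mset_map_col count_cmset) simp
  qed
  then show "mset (map c [1..<Suc n]) = cmset \<theta> k" by (simp add: multiset_eq_iff)
next
  assume m: "mset (map c [1..<Suc n]) = cmset \<theta> k"
  show "cnt n \<theta> c = k"
  proof (rule nth_equalityI)
    show "length (cnt n \<theta> c) = length k" using lk by simp
    fix i assume "i < length (cnt n \<theta> c)"
    then have i: "i < \<theta>" by simp
    have "cnt n \<theta> c ! i = count (mset (map c [1..<Suc n])) i" using i by (simp only: nth_cnt mset_map_col)
    also have "\<dots> = k ! i" using i m by (simp add: count_cmset)
    finally show "cnt n \<theta> c ! i = k ! i" .
  qed
qed

lemma card_col_fiber: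
  assumes lk: "length k = \<theta>" and sk: "sum_list k = n"
  shows "real (card {c\<in>PiE {1..n} (\<lambda>_. {..<\<theta>}). cnt n \<theta> c = k}) = multinom n k"
proof -
  let ?S = "{c\<in>PiE {1..n} (\<lambda>_. {..<\<theta>}). cnt n \<theta> c = k}"
  let ?P = "permutations_of_multiset (cmset \<theta> k)"
  let ?F = "\<lambda>c. map c [1..<Suc n]"
  let ?G = "\<lambda>xs x. if x \<in> {1..n} then xs ! (x - 1) else undefined"
  have lenP: "length xs = n" if "xs \<in> ?P" for xs
  proof -
    have "length xs = size (mset xs)" by simp
    also have "\<dots> = n" using that size_cmset[OF lk] sk by (simp add: permutations_of_multiset_def)
    finally show ?thesis .
  qed
  have GP: "?G xs \<in> PiE {1..n} (\<lambda>_. {..<\<theta>})" if "xs \<in> ?P" for xs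
  proof -
    have "xs ! (x - 1) \<in> {..<\<theta>}" if x: "x \<in> {1..n}" for x
    proof -
      have "xs ! (x - 1) \<in> set xs" using x lenP[OF \<open>xs \<in> ?P\<close>] by auto
      moreover have "set xs = set_mset (cmset \<theta> k)" using \<open>xs \<in> ?P\<close>
        by (metis permutations_of_multisetD set_mset_mset)
      ultimately show ?thesis using set_cmset[of \<theta> k] by blast
    qed
    then show ?thesis by auto
  qed
  have FG: "?F (?G xs) = xs" if "xs \<in> ?P" for xs
    by (rule nth_equalityI) (auto simp: lenP[OF that] simp del: upt_Suc)
  have GF: "?G (?F c) = c" if "c \<in> PiE {1..n} (\<lambda>_. {..<\<theta>})" for c
  proof
    fix x show "?G (?F c) x = c x"
      using that by (cases "x \<in> {1..n}") (auto simp: nth_map PiE_def extensional_def simp del: upt_Suc)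
  qed
  have "bij_betw ?F ?S ?P"
  proof (rule bij_betw_byWitness[where f' = ?G])
    show "\<forall>c\<in>?S. ?G (?F c) = c" using GF by blast
    show "\<forall>xs\<in>?P. ?F (?G xs) = xs" using FG by blast
    show "?F ` ?S \<subseteq> ?P"
    proof
      fix xs assume "xs \<in> ?F ` ?S"
      then obtain c where c: "c \<in> ?S" "xs = ?F c" by blast
      then have "mset xs = cmset \<theta> k" using cnt_iff_mset[OF _ lk, of c] by blast
      then show "xs \<in> ?P" by (rule permutations_of_multisetI)
    qed
    show "?G ` ?P \<subseteq> ?S"
    proof
      fix c assume "c \<in> ?G ` ?P"
      then obtain xs where xs: "xs \<in> ?P" "c = ?G xs" by blast
      have "c \<in> PiE {1..n} (\<lambda>_. {..<\<theta>})" using GP xs by simp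
      moreover have "mset (?F c) = cmset \<theta> k" using FG[OF xs(1)] xs by (simp add: permutations_of_multiset_def)
      ultimately show "c \<in> ?S" using cnt_iff_mset[OF _ lk] by blast
    qed
  qed
  then have cS: "card ?S = card ?P" by (rule bij_betw_same_card)
  have pr: "(\<Prod>x\<in>set_mset (cmset \<theta> k). fact (count (cmset \<theta> k) x)) = (\<Prod>i<\<theta>. fact (k ! i) :: nat)"
  proof -
    have "(\<Prod>x\<in>set_mset (cmset \<theta> k). fact (count (cmset \<theta> k) x)) = (\<Prod>i\<in>{..<\<theta>}. fact (count (cmset \<theta> k) i) :: nat)"
      by (rule prod.mono_neutral_left) (auto simp: set_cmset simp flip: count_eq_zero_iff)
    then show ?thesis by (simp add: count_cmset)
  qed
  have "card ?P * (\<Prod>i<\<theta>. fact (k ! i) :: nat) = fact n"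
    using card_permutations_of_multiset_aux[of "cmset \<theta> k"] pr size_cmset[OF lk] sk by simp
  then have "real (card ?P) * (\<Prod>i<\<theta>. fact (k ! i) :: real) = fact n"
    by (metis (mono_tags, lifting) of_nat_fact of_nat_mult of_nat_prod prod.cong)
  moreover have "(\<Prod>i<\<theta>. fact (k ! i) :: real) \<noteq> 0" by simp
  ultimately show ?thesis unfolding cS multinom_def lk by (simp add: field_simps)
qed

definition comps :: "nat \<Rightarrow> nat \<Rightarrow> nat list set" where
  "comps \<theta> n = {k. length k = \<theta> \<and> sum_list k = n}"

lemma finite_comps: "finite (comps \<theta> n)"
proof -
  have "comps \<theta> n \<subseteq> {xs. set xs \<subseteq> {..n} \<and> length xs = \<theta>}"
    by (auto simp: comps_def member_le_sum_list)
  then show ?thesis by (rule finite_subset) (rule finite_lists_length_eq, simp)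
qed

lemma sortd_part: "k \<in> comps \<theta> n \<Longrightarrow> sortd k \<in> partitions_theta \<theta> n"
  using sum_sortd[of k] by (simp add: comps_def partitions_theta_def sortd_def sorted_wrt_rev)

lemma part_comps: "partitions_theta \<theta> n \<subseteq> comps \<theta> n"
  by (auto simp: comps_def partitions_theta_def)

lemma reord:
  assumes "l \<in> partitions_theta \<theta> n"
  shows "{k\<in>comps \<theta> n. sortd k = l} = reorderings l"
proof
  show "{k\<in>comps \<theta> n. sortd k = l} \<subseteq> reorderings l"
    by (auto simp: reorderings_def)
next
  show "reorderings l \<subseteq> {k\<in>comps \<theta> n. sortd k = l}"
  proof
    fix k assume k: "k \<in> reorderings l"
    have m: "mset k = mset l" "length k = length l" using k by (auto simp: reorderings_def)
    have "sorted (rev l)" using assms by (simp add: partitions_theta_def sorted_wrt_rev)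
    moreover have "mset (rev l) = mset k" using m by simp
    ultimately have "sort k = rev l" by (intro properties_for_sort)
    then have "sortd k = l" by (simp add: sortd_def)
    moreover have "sum_list k = sum_list l" using m by (metis sum_mset_sum_list)
    ultimately show "k \<in> {k\<in>comps \<theta> n. sortd k = l}"
      using assms m by (auto simp: comps_def partitions_theta_def)
  qed
qed

lemma w_cnt:
  assumes "c \<in> PiE {1..n} (\<lambda>_. {..<\<theta>})"
  shows "(\<Prod>x\<in>{1..n}. (p ! (c x) :: real)) = (\<Prod>i<\<theta>. (p ! i) ^ (cnt n \<theta> c ! i))"
proof -
  have "(\<Prod>x\<in>{1..n}. (p ! (c x) :: real)) = (\<Prod>i\<in>{..<\<theta>}. \<Prod>x\<in>{x\<in>{1..n}. c x = i}. p ! (c x))"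
    by (rule prod.group[symmetric]) (use assms in auto)
  also have "\<dots> = (\<Prod>i\<in>{..<\<theta>}. \<Prod>x\<in>{x\<in>{1..n}. c x = i}. p ! i)"
    by (rule prod.cong) auto
  also have "\<dots> = (\<Prod>i<\<theta>. (p ! i) ^ (cnt n \<theta> c ! i))"
    by (rule prod.cong) (auto simp: nth_cnt)
  finally show ?thesis .
qed

theorem lemma2p1:
  fixes \<theta> n :: nat and \<beta> :: real and p :: "real list"
  assumes "\<theta> \<ge> 2" and "\<beta> > 0" and "n \<ge> 1"
    and "length p = \<theta>" and "\<forall>i<\<theta>. p ! i \<ge> 0" and "sum_list p = 1"
  shows "rp_expect n \<beta> (\<lambda>\<sigma>. \<Prod>\<gamma>\<in>perm_cycles n \<sigma>. (\<Sum>i<\<theta>. (p ! i) ^ card \<gamma>))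
       = (\<Sum>l\<in>partitions_theta \<theta> n. multinom n l
            * (\<Sum>\<kappa>\<in>reorderings l. \<Prod>i<\<theta>. (p ! i) ^ (\<kappa> ! i))
            * (\<Sum>\<sigma>\<in>young_subgroup n l. rp_law n \<beta> \<sigma>))"
proof -
  let ?N = "{1..n::nat}"
  let ?Col = "PiE ?N (\<lambda>_. {..<\<theta>})"
  define w where "w c = (\<Prod>x\<in>?N. p ! (c x))" for c :: "nat \<Rightarrow> nat"
  define F where "F l = (\<Sum>\<sigma>\<in>young_subgroup n l. rp_law n \<beta> \<sigma>)" for l
  define g where "g k = (\<Prod>i<\<theta>. (p ! i) ^ (k ! i)) * F (sortd k)" for k
  have b0: "\<beta> \<ge> 0" using assms by simp
  have finCol: "finite ?Col" by (simp add: finite_PiE)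
  have "rp_expect n \<beta> (\<lambda>\<sigma>. \<Prod>\<gamma>\<in>perm_cycles n \<sigma>. (\<Sum>i<\<theta>. (p ! i) ^ card \<gamma>))
      = rp_expect n \<beta> (\<lambda>\<sigma>. \<Sum>c\<in>?Col. if pres n c \<sigma> then w c else 0)"
  proof (rule rp_expect_cong)
    fix \<sigma> :: "nat \<Rightarrow> nat" assume \<sigma>: "\<sigma> permutes ?N"
    have "(\<Prod>\<gamma>\<in>perm_cycles n \<sigma>. (\<Sum>i<\<theta>. (p ! i) ^ card \<gamma>)) = (\<Sum>c\<in>{c\<in>?Col. pres n c \<sigma>}. w c)"
      unfolding w_def by (rule permN.cycles_prod[OF permN.intro[OF \<sigma>]])
    also have "\<dots> = (\<Sum>c\<in>?Col. if pres n c \<sigma> then w c else 0)"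
      by (rule sum.inter_filter[OF finCol])
    finally show "(\<Prod>\<gamma>\<in>perm_cycles n \<sigma>. (\<Sum>i<\<theta>. (p ! i) ^ card \<gamma>)) = (\<Sum>c\<in>?Col. if pres n c \<sigma> then w c else 0)" .
  qed
  also have "\<dots> = (\<Sum>c\<in>?Col. rp_expect n \<beta> (\<lambda>\<sigma>. if pres n c \<sigma> then w c else 0))"
    by (rule rp_expect_sum[OF b0 finCol, where M = "\<lambda>c. \<bar>w c\<bar>"]) auto
  also have "\<dots> = (\<Sum>c\<in>?Col. g (cnt n \<theta> c))"
  proof (rule sum.cong[OF refl])
    fix c assume c: "c \<in> ?Col"
    have "rp_expect n \<beta> (\<lambda>\<sigma>. if pres n c \<sigma> then w c else 0) = rp_expect n \<beta> (\<lambda>\<sigma>. w c * (if pres n c \<sigma> then 1 else 0))"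
      by (rule rp_expect_cong) simp
    also have "\<dots> = w c * rp_expect n \<beta> (\<lambda>\<sigma>. if pres n c \<sigma> then 1 else 0)"
      by (rule rp_expect_scale[OF b0, where M = 1]) simp
    also have "\<dots> = w c * F (sortd (cnt n \<theta> c))"
      unfolding F_def by (simp only: S3[OF b0 c])
    also have "\<dots> = g (cnt n \<theta> c)"
      unfolding g_def w_def w_cnt[OF c] ..
    finally show "rp_expect n \<beta> (\<lambda>\<sigma>. if pres n c \<sigma> then w c else 0) = g (cnt n \<theta> c)" .
  qed
  also have "\<dots> = (\<Sum>k\<in>comps \<theta> n. \<Sum>c\<in>{c\<in>?Col. cnt n \<theta> c = k}. g (cnt n \<theta> c))"
    by (rule sum.group[symmetric, OF finCol finite_comps]) (auto simp: comps_def sum_cnt)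
  also have "\<dots> = (\<Sum>k\<in>comps \<theta> n. multinom n k * g k)"
  proof (rule sum.cong[OF refl])
    fix k assume k: "k \<in> comps \<theta> n"
    have "(\<Sum>c\<in>{c\<in>?Col. cnt n \<theta> c = k}. g (cnt n \<theta> c)) = (\<Sum>c\<in>{c\<in>?Col. cnt n \<theta> c = k}. g k)"
      by (rule sum.cong) auto
    also have "\<dots> = real (card {c\<in>?Col. cnt n \<theta> c = k}) * g k" by simp
    also have "\<dots> = multinom n k * g k" using k card_col_fiber[of k \<theta> n] by (simp add: comps_def)
    finally show "(\<Sum>c\<in>{c\<in>?Col. cnt n \<theta> c = k}. g (cnt n \<theta> c)) = multinom n k * g k" .
  qed
  also have "\<dots> = (\<Sum>l\<in>partitions_theta \<theta> n. \<Sum>k\<in>{k\<in>comps \<theta> n. sortd k = l}. multinom n k * g k)"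
    by (rule sum.group[symmetric, OF finite_comps finite_subset[OF part_comps finite_comps]])
       (auto intro: sortd_part)
  also have "\<dots> = (\<Sum>l\<in>partitions_theta \<theta> n. multinom n l
            * (\<Sum>\<kappa>\<in>reorderings l. \<Prod>i<\<theta>. (p ! i) ^ (\<kappa> ! i)) * F l)"
  proof (rule sum.cong[OF refl])
    fix l assume l: "l \<in> partitions_theta \<theta> n"
    have "(\<Sum>k\<in>{k\<in>comps \<theta> n. sortd k = l}. multinom n k * g k)
        = (\<Sum>k\<in>reorderings l. multinom n l * (\<Prod>i<\<theta>. (p ! i) ^ (k ! i)) * F l)"
      unfolding reord[OF l]
    proof (rule sum.cong[OF refl])
      fix k assume k: "k \<in> reorderings l"
      have "k \<in> {k\<in>comps \<theta> n. sortd k = l}" using k reord[OF l] by simp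
      then have "sortd k = l" by simp
      moreover have "multinom n k = multinom n l" using k by (intro multinom_mset) (simp add: reorderings_def)
      ultimately show "multinom n k * g k = multinom n l * (\<Prod>i<\<theta>. (p ! i) ^ (k ! i)) * F l"
        by (simp add: g_def)
    qed
    also have "\<dots> = multinom n l * (\<Sum>\<kappa>\<in>reorderings l. \<Prod>i<\<theta>. (p ! i) ^ (\<kappa> ! i)) * F l"
      by (simp add: sum_distrib_left sum_distrib_right)
    finally show "(\<Sum>k\<in>{k\<in>comps \<theta> n. sortd k = l}. multinom n k * g k)
        = multinom n l * (\<Sum>\<kappa>\<in>reorderings l. \<Prod>i<\<theta>. (p ! i) ^ (\<kappa> ! i)) * F l" .
  qed
  finally show ?thesis unfolding F_def .
qed

end
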